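(* Let $G=(V,E)$ be a finite simple graph and $v\in V$. Let $G/v$ denote the graph obtained from $G$ by deleting $v$ (and its incident edges) and making the open neighbourhood $N_G(v)$ a clique (adding an edge between any two non-adjacent vertices of $N_G(v)$; already adjacent pairs remain simply adjacent). Then $$\gamma_{coe}(G)-\deg(v)-1\leq \gamma_{coe}(G/v)\leq \gamma_{coe}(G)+\deg(v)-1.$$
   Context: All graphs are finite and simple. For a graph $G=(V,E)$ and $v\in V$, $N_G(v)=\{u\in V: uv\in E\}$ and $\deg(v)=|N_G(v)|$. A set $D\subseteq V$ is a dominating set if every vertex of $V\setminus D$ is adjacent to at least one vertex of $D$. A dominating set $D$ is a co-even dominating set if $\deg(v)$ is even for every $v\in V\setminus D$ (degrees taken in the graph under consideration). The co-even domination number $\gamma_{coe}(G)$ is the minimum cardinality of a co-even dominating set of $G$. *)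

theory Defs
  imports Main
begin

definition simple_graph :: "'a set \<Rightarrow> ('a \<times> 'a) set \<Rightarrow> bool" where
  "simple_graph V E \<longleftrightarrow> finite V \<and> E \<subseteq> V \<times> V \<and>
     (\<forall>x. (x, x) \<notin> E) \<and> (\<forall>x y. (x, y) \<in> E \<longrightarrow> (y, x) \<in> E)"

definition nbhd :: "('a \<times> 'a) set \<Rightarrow> 'a \<Rightarrow> 'a set" where
  "nbhd E v = {u. (v, u) \<in> E}"

definition deg :: "('a \<times> 'a) set \<Rightarrow> 'a \<Rightarrow> nat" where
  "deg E v = card (nbhd E v)"

definition dominating_set :: "'a set \<Rightarrow> ('a \<times> 'a) set \<Rightarrow> 'a set \<Rightarrow> bool" where
  "dominating_set V E D \<longleftrightarrow> D \<subseteq> V \<and> (\<forall>v \<in> V - D. \<exists>u \<in> D. (v, u) \<in> E)"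

definition coeven_dominating_set :: "'a set \<Rightarrow> ('a \<times> 'a) set \<Rightarrow> 'a set \<Rightarrow> bool" where
  "coeven_dominating_set V E D \<longleftrightarrow> dominating_set V E D \<and> (\<forall>v \<in> V - D. even (deg E v))"

text \<open>Minimum cardinality of a co-even dominating set (V itself always is one).\<close>
definition gamma_coe :: "'a set \<Rightarrow> ('a \<times> 'a) set \<Rightarrow> nat" where
  "gamma_coe V E = Min {card D | D. coeven_dominating_set V E D}"

text \<open>G/v: delete v and make N_G(v) a clique. Vertex set is V - {v}.\<close>
definition contract_edges :: "'a set \<Rightarrow> ('a \<times> 'a) set \<Rightarrow> 'a \<Rightarrow> ('a \<times> 'a) set" where
  "contract_edges V E v = {(x, y). x \<in> V - {v} \<and> y \<in> V - {v} \<and> x \<noteq> y \<and>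
      ((x, y) \<in> E \<or> (x \<in> nbhd E v \<and> y \<in> nbhd E v))}"

end

theory Submission
  imports Defs
begin

lemma gamma_le:
  assumes "finite V" "coeven_dominating_set V E D"
  shows "gamma_coe V E \<le> card D"
proof -
  have "{card D | D. coeven_dominating_set V E D} \<subseteq> card ` Pow V"
    by (auto simp: coeven_dominating_set_def dominating_set_def)
  hence fin: "finite {card D | D. coeven_dominating_set V E D}"
    using assms(1) finite_subset by blast
  show ?thesis unfolding gamma_coe_def
    by (rule Min_le[OF fin]) (use assms(2) in blast)
qed

lemma gamma_ex:
  assumes "finite V"
  shows "\<exists>D. coeven_dominating_set V E D \<and> card D = gamma_coe V E"
proof -
  have "{card D | D. coeven_dominating_set V E D} \<subseteq> card ` Pow V"
    by (auto simp: coeven_dominating_set_def dominating_set_def)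
  hence fin: "finite {card D | D. coeven_dominating_set V E D}"
    using assms(1) finite_subset by blast
  have "coeven_dominating_set V E V"
    by (auto simp: coeven_dominating_set_def dominating_set_def)
  hence ne: "{card D | D. coeven_dominating_set V E D} \<noteq> {}" by blast
  from Min_in[OF fin ne] show ?thesis unfolding gamma_coe_def by force
qed

theorem mainTheorem4:
  fixes V :: "'a set" and E :: "('a \<times> 'a) set" and v :: 'a
  assumes "simple_graph V E" and "v \<in> V"
  shows "int (gamma_coe V E) - int (deg E v) - 1 \<le> int (gamma_coe (V - {v}) (contract_edges V E v))
       \<and> int (gamma_coe (V - {v}) (contract_edges V E v)) \<le> int (gamma_coe V E) + int (deg E v) - 1"
proof -
  define E' where "E' = contract_edges V E v"
  define N where "N = nbhd E v"
  have finV: "finite V" and EV: "E \<subseteq> V \<times> V" and irr: "\<And>x. (x,x) \<notin> E"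
    and sym: "\<And>x y. (x,y) \<in> E \<Longrightarrow> (y,x) \<in> E"
    using assms(1) by (auto simp: simple_graph_def)
  have NV: "N \<subseteq> V" using EV by (auto simp: N_def nbhd_def)
  have vN: "v \<notin> N" using irr by (auto simp: N_def nbhd_def)
  have finN: "finite N" using NV finV finite_subset by blast
  have degN: "deg E v = card N" by (simp add: deg_def N_def)
  have nb_eq: "nbhd E' x = nbhd E x" if "x \<in> V" "x \<noteq> v" "x \<notin> N" for x
  proof -
    have "(x, v) \<notin> E" using that sym by (auto simp: N_def nbhd_def)
    thus ?thesis using that EV irr
      by (auto simp: E'_def contract_edges_def nbhd_def N_def)
  qed
  have part1: "gamma_coe V E \<le> gamma_coe (V - {v}) E' + card N + 1"
  proof -
    obtain D' where D': "coeven_dominating_set (V - {v}) E' D'"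
      and cD': "card D' = gamma_coe (V - {v}) E'"
      using gamma_ex[of "V - {v}" E'] finV by blast
    define D where "D = D' \<union> N \<union> {v}"
    have D'V: "D' \<subseteq> V - {v}" using D' by (simp add: coeven_dominating_set_def dominating_set_def)
    have finD': "finite D'" using D'V finV finite_subset by blast
    have "coeven_dominating_set V E D"
      unfolding coeven_dominating_set_def dominating_set_def
    proof (intro conjI ballI)
      show "D \<subseteq> V" using D'V NV assms(2) by (auto simp: D_def)
    next
      fix x assume x: "x \<in> V - D"
      hence x2: "x \<in> V - {v} - D'" "x \<notin> N" "x \<noteq> v" by (auto simp: D_def)
      then obtain u where u: "u \<in> D'" "(x,u) \<in> E'"
        using D' x2(1) unfolding coeven_dominating_set_def dominating_set_def by blast
      hence "(x,u) \<in> E" using x2 by (auto simp: E'_def contract_edges_def N_def)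
      thus "\<exists>u\<in>D. (x, u) \<in> E" using u by (auto simp: D_def)
    next
      fix x assume x: "x \<in> V - D"
      hence x2: "x \<in> V - {v} - D'" "x \<notin> N" "x \<noteq> v" "x \<in> V" by (auto simp: D_def)
      hence "even (deg E' x)" using D' by (auto simp: coeven_dominating_set_def)
      thus "even (deg E x)" using nb_eq[OF x2(4) x2(3) x2(2)] by (simp add: deg_def)
    qed
    hence "gamma_coe V E \<le> card D" using gamma_le finV by blast
    also have "card D \<le> card D' + card N + 1"
    proof -
      have "card D \<le> card (D' \<union> N) + card {v}" unfolding D_def by (rule card_Un_le)
      also have "card (D' \<union> N) \<le> card D' + card N" by (rule card_Un_le)
      finally show ?thesis by simp
    qed
    finally show ?thesis using cD' by simp
  qed
  have part2: "gamma_coe (V - {v}) E' + 1 \<le> gamma_coe V E + card N"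
  proof -
    obtain D where D: "coeven_dominating_set V E D"
      and cD: "card D = gamma_coe V E"
      using gamma_ex[of V E] finV by blast
    define D' where "D' = (D - {v}) \<union> N"
    have DV: "D \<subseteq> V" using D by (simp add: coeven_dominating_set_def dominating_set_def)
    have finD: "finite D" using DV finV finite_subset by blast
    have "coeven_dominating_set (V - {v}) E' D'"
      unfolding coeven_dominating_set_def dominating_set_def
    proof (intro conjI ballI)
      show "D' \<subseteq> V - {v}" using DV NV vN by (auto simp: D'_def)
    next
      fix x assume x: "x \<in> V - {v} - D'"
      hence x2: "x \<in> V - D" "x \<notin> N" "x \<noteq> v" "x \<in> V" by (auto simp: D'_def)
      then obtain u where u: "u \<in> D" "(x,u) \<in> E"
        using D x2(1) unfolding coeven_dominating_set_def dominating_set_def by blast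
      have "u \<noteq> v" using u x2 sym by (auto simp: N_def nbhd_def)
      hence "(x,u) \<in> E'" using u x2 EV irr by (auto simp: E'_def contract_edges_def)
      thus "\<exists>u\<in>D'. (x, u) \<in> E'" using u \<open>u \<noteq> v\<close> by (auto simp: D'_def)
    next
      fix x assume x: "x \<in> V - {v} - D'"
      hence x2: "x \<in> V - D" "x \<notin> N" "x \<noteq> v" "x \<in> V" by (auto simp: D'_def)
      hence "even (deg E x)" using D by (auto simp: coeven_dominating_set_def)
      thus "even (deg E' x)" using nb_eq[OF x2(4) x2(3) x2(2)] by (simp add: deg_def)
    qed
    hence "gamma_coe (V - {v}) E' \<le> card D'" using gamma_le finV by blast
    moreover have "card D' + 1 \<le> card D + card N"
    proof (cases "v \<in> D")
      case True
      have "card D' \<le> card (D - {v}) + card N" unfolding D'_def by (rule card_Un_le)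
      moreover have "card (D - {v}) + 1 = card D" using True finD
        by (metis One_nat_def Suc_pred card_Diff_singleton card_gt_0_iff empty_iff add.commute plus_1_eq_Suc)
      ultimately show ?thesis by simp
    next
      case False
      hence "v \<in> V - D" using assms(2) by simp
      then obtain u where u: "u \<in> D" "(v,u) \<in> E"
        using D unfolding coeven_dominating_set_def dominating_set_def by blast
      hence "u \<in> D \<inter> N" by (simp add: N_def nbhd_def)
      hence "card (D \<inter> N) \<ge> 1" using finD
        by (metis One_nat_def Suc_leI card_gt_0_iff empty_iff finite_Int)
      moreover have "card (D \<union> N) + card (D \<inter> N) = card D + card N"
        using card_Un_Int[OF finD finN] by simp
      moreover have "D' = D \<union> N" using False by (auto simp: D'_def)
      ultimately show ?thesis by simp
    qed
    ultimately show ?thesis using cD by simp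
  qed
  show ?thesis using part1 part2 degN unfolding E'_def[symmetric] by simp
qed

end
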